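(* Let $G$ and $H$ be isomorphic graphs on $n\ge 3$ vertices and let $1\le k\le n-1$. The following are equivalent: 1) $F_k(G)$ is uniquely reconstructible as the $k$-token graph of $G$. 2) $\operatorname{Aut}(F_k(G))\simeq\operatorname{Aut}(G)\times\mathbb{Z}_2$ if $k=n/2$, and $\operatorname{Aut}(F_k(G))\simeq\operatorname{Aut}(G)$ otherwise. 3) For every $\psi\in\operatorname{Iso}(F_k(H),F_k(G))$ there exists $f(\psi)\in\operatorname{Iso}(H,G)$ such that $\psi=\iota(f(\psi))$ or $\psi=\mathfrak{c}\circ\iota(f(\psi))$. 4) There exists a function $f$ assigning to every $\psi\in\operatorname{Iso}(F_k(H),F_k(G))$ a function $f(\psi):V(H)\to V(G)$ such that for every vertex $u$ of $H$, either $\psi(\kappa_H(u,k))=\kappa_G(f(\psi)(u),k)$ or $\psi(\kappa_H(u,k))=\overline{\kappa_G}(f(\psi)(u),k)$.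
   Context: $F_k(G)$ is the graph on the $k$-subsets of $V(G)$ in which $A,B$ are adjacent iff $A\triangle B$ is an edge of $G$. $\operatorname{Iso}(X,Y)$ denotes the set of graph isomorphisms $X\to Y$ and $\operatorname{Aut}(X)$ the automorphism group. For $\psi\in\operatorname{Iso}(H,G)$, $\iota(\psi):V(F_k(H))\to V(F_k(G))$ is $\iota(\psi)(A)=\{\psi(v):v\in A\}$. $\mathfrak{c}$ sends each $k$-subset $A$ of $V(G)$ to $V(G)\setminus A$ (an isomorphism $F_k(G)\to F_{n-k}(G)$). For a vertex $u$ of $G$, $\kappa_G(u,k)=\{A\in V(F_k(G)):u\in A\}$ and $\overline{\kappa_G}(u,k)=\{A\in V(F_k(G)):u\notin A\}$ (similarly for $H$). A $k$-token reconstruction of a graph $F$ is a pair $(G',\varphi)$ with $\varphi$ an isomorphism $F\to F_k(G')$. Two $k$-token reconstructions $(G,\varphi),(G,\psi)$ of $F$ are equivalent if there is $s\in\operatorname{Aut}(G)$ with $\psi=\iota(s)\circ\varphi$ or $\psi=\mathfrak{c}\circ\iota(s)\circ\varphi$. $F$ is uniquely reconstructible as the $k$-token graph of $G$ if any two $k$-token reconstructions of $F$ of the form $(G,\cdot)$ are equivalent. *)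

theory Defs
  imports "HOL-Algebra.Elementary_Groups" "HOL-Library.FuncSet"
begin

record 'a sgraph =
  verts :: "'a set"
  edges :: "'a set set"

definition simple_graph :: "('a, 'm) sgraph_scheme \<Rightarrow> bool" where
  "simple_graph G \<longleftrightarrow> finite (verts G) \<and>
     (\<forall>e \<in> edges G. e \<subseteq> verts G \<and> card e = 2)"

definition Iso :: "('a, 'm) sgraph_scheme \<Rightarrow> ('b, 'n) sgraph_scheme \<Rightarrow> ('a \<Rightarrow> 'b) set" where
  "Iso X Y = {f. f \<in> extensional (verts X) \<and> bij_betw f (verts X) (verts Y) \<and>
     (\<forall>u \<in> verts X. \<forall>v \<in> verts X. {u, v} \<in> edges X \<longleftrightarrow> {f u, f v} \<in> edges Y)}"

definition Aut :: "('a, 'm) sgraph_scheme \<Rightarrow> ('a \<Rightarrow> 'a) set" where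
  "Aut X = Iso X X"

definition isomorphic :: "('a, 'm) sgraph_scheme \<Rightarrow> ('b, 'n) sgraph_scheme \<Rightarrow> bool" where
  "isomorphic X Y \<longleftrightarrow> Iso X Y \<noteq> {}"

definition aut_group :: "('a, 'm) sgraph_scheme \<Rightarrow> ('a \<Rightarrow> 'a) monoid" where
  "aut_group X = \<lparr>carrier = Aut X, mult = (\<lambda>f g. compose (verts X) f g),
                  one = restrict id (verts X)\<rparr>"

definition token_verts :: "('a, 'm) sgraph_scheme \<Rightarrow> nat \<Rightarrow> 'a set set" where
  "token_verts G k = {A. A \<subseteq> verts G \<and> card A = k}"

definition token_graph :: "('a, 'm) sgraph_scheme \<Rightarrow> nat \<Rightarrow> 'a set sgraph" where
  "token_graph G k = \<lparr>verts = token_verts G k,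
     edges = {{A, B} | A B. A \<in> token_verts G k \<and> B \<in> token_verts G k \<and>
                             (A - B) \<union> (B - A) \<in> edges G}\<rparr>"

definition iota :: "('b, 'm) sgraph_scheme \<Rightarrow> nat \<Rightarrow> ('b \<Rightarrow> 'a) \<Rightarrow> ('b set \<Rightarrow> 'a set)" where
  "iota H k psi = restrict (\<lambda>A. psi ` A) (token_verts H k)"

definition cmpl :: "('a, 'm) sgraph_scheme \<Rightarrow> nat \<Rightarrow> ('a set \<Rightarrow> 'a set)" where
  "cmpl G k = restrict (\<lambda>A. verts G - A) (token_verts G k)"

definition kappa :: "('a, 'm) sgraph_scheme \<Rightarrow> 'a \<Rightarrow> nat \<Rightarrow> 'a set set" where
  "kappa G u k = {A \<in> token_verts G k. u \<in> A}"

definition kappa_bar :: "('a, 'm) sgraph_scheme \<Rightarrow> 'a \<Rightarrow> nat \<Rightarrow> 'a set set" where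
  "kappa_bar G u k = {A \<in> token_verts G k. u \<notin> A}"

text \<open>Unique reconstructibility of F_k(G) as the k-token graph of G: any two
  k-token reconstructions (G, phi), (G, psi) of F_k(G) are equivalent.\<close>

definition uniquely_reconstructible :: "('a, 'm) sgraph_scheme \<Rightarrow> nat \<Rightarrow> bool" where
  "uniquely_reconstructible G k \<longleftrightarrow>
     (\<forall>phi \<in> Iso (token_graph G k) (token_graph G k).
      \<forall>psi \<in> Iso (token_graph G k) (token_graph G k).
        (\<exists>s \<in> Aut G.
           psi = compose (token_verts G k) (iota G k s) phi \<or>
           psi = compose (token_verts G k) (cmpl G k) (compose (token_verts G k) (iota G k s) phi)))"

end

theory Submission
  imports Defs
begin

lemma Iso_D:
  assumes "f \<in> Iso X Y"
  shows "f \<in> extensional (verts X)" "bij_betw f (verts X) (verts Y)"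
    "\<And>u v. u \<in> verts X \<Longrightarrow> v \<in> verts X \<Longrightarrow> {u, v} \<in> edges X \<longleftrightarrow> {f u, f v} \<in> edges Y"
  using assms by (auto simp: Iso_def)

lemma Iso_compose:
  assumes "f \<in> Iso X Y" "g \<in> Iso Y Z"
  shows "compose (verts X) g f \<in> Iso X Z"
proof -
  have bf: "bij_betw f (verts X) (verts Y)" and bg: "bij_betw g (verts Y) (verts Z)"
    using assms by (auto simp: Iso_def)
  have fin: "f u \<in> verts Y" if "u \<in> verts X" for u using bf that bij_betwE by blast
  show ?thesis unfolding Iso_def
  proof (intro CollectI conjI ballI)
    show "compose (verts X) g f \<in> extensional (verts X)" by (simp add: compose_def)
    show "bij_betw (compose (verts X) g f) (verts X) (verts Z)"
      using bij_betw_compose[OF bf bg] by simp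
  next
    fix u v assume "u \<in> verts X" "v \<in> verts X"
    then show "({u, v} \<in> edges X) = ({compose (verts X) g f u, compose (verts X) g f v} \<in> edges Z)"
      using Iso_D(3)[OF assms(1)] Iso_D(3)[OF assms(2)] fin by (simp add: compose_def)
  qed
qed

lemma Iso_inv:
  assumes "f \<in> Iso X Y"
  shows "restrict (inv_into (verts X) f) (verts Y) \<in> Iso Y X"
proof -
  have bf: "bij_betw f (verts X) (verts Y)" using assms by (auto simp: Iso_def)
  have bi: "bij_betw (inv_into (verts X) f) (verts Y) (verts X)" using bij_betw_inv_into[OF bf] .
  show ?thesis unfolding Iso_def
  proof (intro CollectI conjI ballI)
    show "restrict (inv_into (verts X) f) (verts Y) \<in> extensional (verts Y)" by (rule restrict_extensional)
    show "bij_betw (restrict (inv_into (verts X) f) (verts Y)) (verts Y) (verts X)"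
      using bi by (simp only: bij_betw_restrict_eq)
  next
    fix u v assume uv: "u \<in> verts Y" "v \<in> verts Y"
    define a where "a = inv_into (verts X) f u"
    define b where "b = inv_into (verts X) f v"
    have ab: "a \<in> verts X" "b \<in> verts X"
      using bi uv bij_betwE unfolding a_def b_def by blast+
    moreover have "f a = u" "f b = v"
      using bf uv unfolding a_def b_def by (simp_all add: bij_betw_inv_into_right)
    ultimately have "({u, v} \<in> edges Y) = ({a, b} \<in> edges X)"
      using Iso_D(3)[OF assms, of a b] by simp
    then show "({u, v} \<in> edges Y) = ({restrict (inv_into (verts X) f) (verts Y) u, restrict (inv_into (verts X) f) (verts Y) v} \<in> edges X)"
      using uv unfolding a_def b_def by simp
  qed
qed
lemma Iso_id: "restrict id (verts X) \<in> Iso X X"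
  unfolding Iso_def by (auto simp: bij_betw_def inj_on_def)

lemma group_aut: "group (aut_group X)"
proof (rule groupI)
  fix x y z assume x: "x \<in> carrier (aut_group X)" and y: "y \<in> carrier (aut_group X)"
    and z: "z \<in> carrier (aut_group X)"
  have xf: "x \<in> verts X \<rightarrow> verts X" "y \<in> verts X \<rightarrow> verts X" "z \<in> verts X \<rightarrow> verts X"
    using x y z by (auto simp: aut_group_def Aut_def Iso_def bij_betw_def)
  show "x \<otimes>\<^bsub>aut_group X\<^esub> y \<otimes>\<^bsub>aut_group X\<^esub> z = x \<otimes>\<^bsub>aut_group X\<^esub> (y \<otimes>\<^bsub>aut_group X\<^esub> z)"
    using xf by (simp add: aut_group_def compose_assoc)
next
  fix x y assume x: "x \<in> carrier (aut_group X)" and y: "y \<in> carrier (aut_group X)"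
  then show "x \<otimes>\<^bsub>aut_group X\<^esub> y \<in> carrier (aut_group X)"
    by (simp add: aut_group_def Aut_def Iso_compose)
next
  show "\<one>\<^bsub>aut_group X\<^esub> \<in> carrier (aut_group X)"
    by (simp add: aut_group_def Aut_def Iso_id)
next
  fix x assume x: "x \<in> carrier (aut_group X)"
  then have "x \<in> verts X \<rightarrow> verts X" "x \<in> extensional (verts X)"
    by (auto simp: aut_group_def Aut_def Iso_def bij_betw_def)
  then show "\<one>\<^bsub>aut_group X\<^esub> \<otimes>\<^bsub>aut_group X\<^esub> x = x"
    using Id_compose[of x "verts X" "verts X"] by (simp add: aut_group_def id_def)
next
  fix x assume x: "x \<in> carrier (aut_group X)"
  then have xi: "x \<in> Iso X X" by (simp add: aut_group_def Aut_def)
  then have bx: "bij_betw x (verts X) (verts X)" by (simp add: Iso_def)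
  let ?y = "restrict (inv_into (verts X) x) (verts X)"
  have "?y \<in> carrier (aut_group X)" using Iso_inv[OF xi] by (simp add: aut_group_def Aut_def)
  moreover have "?y \<otimes>\<^bsub>aut_group X\<^esub> x = \<one>\<^bsub>aut_group X\<^esub>"
    using compose_inv_into_id[OF bx] by (simp add: aut_group_def id_def)
  ultimately show "\<exists>y\<in>carrier (aut_group X). y \<otimes>\<^bsub>aut_group X\<^esub> x = \<one>\<^bsub>aut_group X\<^esub>" by blast
qed

lemma verts_tg [simp]: "verts (token_graph G k) = token_verts G k"
  by (simp add: token_graph_def)

lemma edges_tg:
  assumes "A \<in> token_verts G k" "B \<in> token_verts G k"
  shows "({A, B} \<in> edges (token_graph G k)) = ((A - B) \<union> (B - A) \<in> edges G)"
proof
  assume "(A - B) \<union> (B - A) \<in> edges G"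
  then show "{A, B} \<in> edges (token_graph G k)" using assms by (auto simp: token_graph_def)
next
  assume "{A, B} \<in> edges (token_graph G k)"
  then obtain A' B' where e: "{A, B} = {A', B'}" "(A' - B') \<union> (B' - A') \<in> edges G"
    by (auto simp: token_graph_def)
  then have "(A = A' \<and> B = B') \<or> (A = B' \<and> B = A')" by (simp add: doubleton_eq_iff)
  then show "(A - B) \<union> (B - A) \<in> edges G" using e(2) by (metis Un_commute)
qed

lemma edge_image:
  assumes "simple_graph X" "simple_graph Y" "g \<in> Iso X Y" "e \<subseteq> verts X"
  shows "(e \<in> edges X) = (g ` e \<in> edges Y)"
proof -
  have inj: "inj_on g (verts X)" using assms(3) by (simp add: Iso_def bij_betw_def)
  have ce: "card (g ` e) = card e" by (rule card_image[OF inj_on_subset[OF inj assms(4)]])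
  have key: "(e \<in> edges X) = (g ` e \<in> edges Y)" if c2: "card e = 2"
  proof -
    obtain u v where uv: "e = {u, v}" "u \<noteq> v" using card_2_iff[THEN iffD1, OF c2] by blast
    have uvX: "u \<in> verts X" "v \<in> verts X" using uv assms(4) by auto
    have im: "g ` e = {g u, g v}" using uv(1) by simp
    have "({u, v} \<in> edges X) = ({g u, g v} \<in> edges Y)" by (rule Iso_D(3)[OF assms(3) uvX])
    then show ?thesis using im uv(1) by simp
  qed
  show ?thesis
  proof
    assume "e \<in> edges X"
    then have "card e = 2" using assms(1) by (simp add: simple_graph_def)
    then show "g ` e \<in> edges Y" using key \<open>e \<in> edges X\<close> by simp
  next
    assume "g ` e \<in> edges Y"
    then have "card e = 2" using assms(2) ce by (simp add: simple_graph_def)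
    then show "e \<in> edges X" using key \<open>g ` e \<in> edges Y\<close> by simp
  qed
qed

lemma image_symdiff:
  assumes "inj_on g V" "A \<subseteq> V" "B \<subseteq> V"
  shows "g ` ((A - B) \<union> (B - A)) = (g ` A - g ` B) \<union> (g ` B - g ` A)"
proof -
  have "g ` (A - B) = g ` A - g ` B" using assms inj_on_image_set_diff[of g V A B] by blast
  moreover have "g ` (B - A) = g ` B - g ` A" using assms inj_on_image_set_diff[of g V B A] by blast
  ultimately show ?thesis by (simp add: image_Un)
qed

lemma tv_image:
  assumes "bij_betw g (verts H) (verts G)" "A \<in> token_verts H k"
  shows "g ` A \<in> token_verts G k"
proof -
  have "A \<subseteq> verts H" "card A = k" using assms(2) by (auto simp: token_verts_def)
  moreover have "inj_on g A" using assms(1) \<open>A \<subseteq> verts H\<close> by (meson bij_betw_def inj_on_subset)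
  ultimately have "card (g ` A) = k" by (simp add: card_image)
  moreover have "g ` A \<subseteq> verts G" using assms(1) \<open>A \<subseteq> verts H\<close> bij_betw_imp_surj_on by blast
  ultimately show ?thesis by (simp add: token_verts_def)
qed

lemma tv_preimage:
  assumes "bij_betw g (verts H) (verts G)" "B \<in> token_verts G k"
  obtains A where "A \<in> token_verts H k" "g ` A = B"
proof -
  let ?A = "{x \<in> verts H. g x \<in> B}"
  have BV: "B \<subseteq> verts G" "card B = k" using assms(2) by (auto simp: token_verts_def)
  have im: "g ` ?A = B" using assms(1) BV(1) by (auto simp: bij_betw_def)
  have "inj_on g ?A" using assms(1) by (auto simp: bij_betw_def inj_on_def)
  then have "card ?A = k" using im BV(2) by (metis card_image)
  then have "?A \<in> token_verts H k" by (auto simp: token_verts_def)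
  then show ?thesis using im that by blast
qed

lemma iota_apply [simp]: "A \<in> token_verts H k \<Longrightarrow> iota H k g A = g ` A"
  by (simp add: iota_def)

lemma cmpl_apply [simp]: "A \<in> token_verts G k \<Longrightarrow> cmpl G k A = verts G - A"
  by (simp add: cmpl_def)

lemma iota_bij:
  assumes "bij_betw g (verts H) (verts G)"
  shows "bij_betw (iota H k g) (token_verts H k) (token_verts G k)"
proof -
  have "bij_betw (\<lambda>A. g ` A) (token_verts H k) (token_verts G k)"
    unfolding bij_betw_def
  proof
    show "inj_on ((`) g) (token_verts H k)"
    proof (rule inj_onI)
      fix A B assume "A \<in> token_verts H k" "B \<in> token_verts H k" "g ` A = g ` B"
      then show "A = B" using assms
        by (metis (no_types, lifting) bij_betw_def inj_on_image_eq_iff mem_Collect_eq token_verts_def)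
    qed
    show "(`) g ` token_verts H k = token_verts G k"
    proof
      show "(`) g ` token_verts H k \<subseteq> token_verts G k" using tv_image[OF assms] by blast
      show "token_verts G k \<subseteq> (`) g ` token_verts H k"
      proof
        fix B assume "B \<in> token_verts G k"
        then obtain A where "A \<in> token_verts H k" "g ` A = B" using tv_preimage[OF assms] by blast
        then show "B \<in> (`) g ` token_verts H k" by blast
      qed
    qed
  qed
  then show ?thesis unfolding iota_def by (simp only: bij_betw_restrict_eq)
qed

lemma iota_Iso:
  assumes "simple_graph H" "simple_graph G" "g \<in> Iso H G"
  shows "iota H k g \<in> Iso (token_graph H k) (token_graph G k)"
proof -
  have bg: "bij_betw g (verts H) (verts G)" using assms(3) by (simp add: Iso_def)
  have inj: "inj_on g (verts H)" using bg by (simp add: bij_betw_def)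
  show ?thesis unfolding Iso_def
  proof (intro CollectI conjI ballI)
    show "iota H k g \<in> extensional (verts (token_graph H k))" by (simp add: iota_def)
    show "bij_betw (iota H k g) (verts (token_graph H k)) (verts (token_graph G k))"
      using iota_bij[OF bg] by simp
  next
    fix A B assume AB: "A \<in> verts (token_graph H k)" "B \<in> verts (token_graph H k)"
    then have AB': "A \<in> token_verts H k" "B \<in> token_verts H k" by simp_all
    have sub: "A \<subseteq> verts H" "B \<subseteq> verts H" using AB' by (auto simp: token_verts_def)
    have "({A, B} \<in> edges (token_graph H k)) = ((A - B) \<union> (B - A) \<in> edges H)"
      using edges_tg[OF AB'] .
    also have "\<dots> = (g ` ((A - B) \<union> (B - A)) \<in> edges G)"
      using edge_image[OF assms, of "(A - B) \<union> (B - A)"] sub by blast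
    also have "\<dots> = ((g ` A - g ` B) \<union> (g ` B - g ` A) \<in> edges G)"
      using image_symdiff[OF inj sub] by simp
    also have "\<dots> = ({g ` A, g ` B} \<in> edges (token_graph G k))"
      using edges_tg[OF tv_image[OF bg AB'(1)] tv_image[OF bg AB'(2)]] by simp
    finally show "({A, B} \<in> edges (token_graph H k)) =
       ({iota H k g A, iota H k g B} \<in> edges (token_graph G k))" using AB' by simp
  qed
qed

lemma cmpl_tv:
  assumes "finite (verts G)" "card (verts G) = 2 * k" "A \<in> token_verts G k"
  shows "verts G - A \<in> token_verts G k"
proof -
  have A: "A \<subseteq> verts G" "card A = k" using assms(3) by (auto simp: token_verts_def)
  then have "finite A" using assms(1) finite_subset by blast
  then have "card (verts G - A) = k" using card_Diff_subset[OF _ A(1)] A(2) assms(2) by simp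
  then show ?thesis by (simp add: token_verts_def)
qed

lemma cmpl_Aut:
  assumes "finite (verts G)" "card (verts G) = 2 * k"
  shows "cmpl G k \<in> Aut (token_graph G k)"
  unfolding Aut_def Iso_def
proof (intro CollectI conjI ballI)
  show "cmpl G k \<in> extensional (verts (token_graph G k))" by (simp add: cmpl_def)
  have "bij_betw (\<lambda>A. verts G - A) (token_verts G k) (token_verts G k)"
    by (rule bij_betw_byWitness[where f'="\<lambda>A. verts G - A"])
       (use cmpl_tv[OF assms] in \<open>auto simp: token_verts_def double_diff\<close>)
  then show "bij_betw (cmpl G k) (verts (token_graph G k)) (verts (token_graph G k))"
    unfolding cmpl_def by simp
next
  fix A B assume AB: "A \<in> verts (token_graph G k)" "B \<in> verts (token_graph G k)"
  then have AB': "A \<in> token_verts G k" "B \<in> token_verts G k" by simp_all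
  have "(verts G - A - (verts G - B)) \<union> (verts G - B - (verts G - A)) = (A - B) \<union> (B - A)"
    using AB' by (auto simp: token_verts_def)
  then show "({A, B} \<in> edges (token_graph G k)) =
       ({cmpl G k A, cmpl G k B} \<in> edges (token_graph G k))"
    using edges_tg[OF AB'] edges_tg[OF cmpl_tv[OF assms AB'(1)] cmpl_tv[OF assms AB'(2)]] AB' by simp
qed

lemma card_minus_pair:
  assumes "finite W" "u \<in> W" "v \<in> W" "u \<noteq> v"
  shows "card (W - {u, v}) = card W - 2"
proof -
  have "{u, v} \<subseteq> W" "card {u, v} = 2" using assms by auto
  then show ?thesis using card_Diff_subset[of "{u, v}" W] by simp
qed

lemma ex_B0:
  assumes "finite W" "u \<in> W" "v \<in> W" "u \<noteq> v" "1 \<le> k" "k \<le> card W - 1"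
  obtains B0 where "B0 \<subseteq> W - {u, v}" "card B0 = k - 1" "finite B0"
proof -
  have "k - 1 \<le> card (W - {u, v})" using card_minus_pair[OF assms(1-4)] assms(5,6) by simp
  then show ?thesis using obtain_subset_with_card_n that by blast
qed

lemma ex_sep:
  assumes "finite W" "u \<in> W" "v \<in> W" "u \<noteq> v" "1 \<le> k" "k \<le> card W - 1"
  shows "\<exists>A. A \<subseteq> W \<and> card A = k \<and> u \<in> A \<and> v \<notin> A"
proof -
  obtain B0 where B0: "B0 \<subseteq> W - {u, v}" "card B0 = k - 1" "finite B0"
    using ex_B0[OF assms] by blast
  have "u \<notin> B0" using B0(1) by auto
  then have "card (insert u B0) = k" using B0 assms(5) by simp
  moreover have "insert u B0 \<subseteq> W" using B0 assms(2) by auto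
  moreover have "v \<notin> insert u B0" using B0(1) assms(4) by auto
  ultimately show ?thesis by blast
qed

lemma ex_same:
  assumes "finite W" "u \<in> W" "v \<in> W" "u \<noteq> v" "1 \<le> k" "k \<le> card W - 1" "3 \<le> card W"
  shows "\<exists>A. A \<subseteq> W \<and> card A = k \<and> (u \<in> A \<longleftrightarrow> v \<in> A)"
proof (cases "2 \<le> k")
  case True
  have "k - 2 \<le> card (W - {u, v})" using card_minus_pair[OF assms(1-4)] assms(5,6) by simp
  then obtain B0 where B0: "B0 \<subseteq> W - {u, v}" "card B0 = k - 2" "finite B0"
    using obtain_subset_with_card_n by blast
  have "u \<notin> B0" "v \<notin> B0" using B0(1) by auto
  then have "card (insert u (insert v B0)) = k" using B0 True assms(4) by simp
  moreover have "insert u (insert v B0) \<subseteq> W" using B0 assms(2,3) by auto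
  ultimately show ?thesis by blast
next
  case False
  then have k1: "k = 1" using assms(5) by simp
  have "1 \<le> card (W - {u, v})" using card_minus_pair[OF assms(1-4)] assms(7) by simp
  then obtain x where "x \<in> W - {u, v}" by (metis card.empty ex_in_conv not_one_le_zero)
  then have "{x} \<subseteq> W" "card {x} = k" "u \<notin> {x}" "v \<notin> {x}" using k1 by auto
  then show ?thesis by blast
qed

lemma image_restrict_sub: "A \<subseteq> W \<Longrightarrow> restrict f W ` A = f ` A"
  by auto

lemma tv_sub: "A \<in> token_verts G k \<Longrightarrow> A \<subseteq> verts G"
  by (simp add: token_verts_def)

lemma tv_card: "A \<in> token_verts G k \<Longrightarrow> card A = k"
  by (simp add: token_verts_def)

lemma iso_from_symdiff:
  assumes sH: "simple_graph H" and sG: "simple_graph G"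
    and psi: "psi \<in> Iso (token_graph H k) (token_graph G k)"
    and fin: "finite (verts H)"
    and inj: "inj_on f (verts H)" and surj: "f ` verts H = verts G"
    and k: "1 \<le> k" "k \<le> card (verts H) - 1"
    and sd: "\<And>A B. A \<in> token_verts H k \<Longrightarrow> B \<in> token_verts H k \<Longrightarrow>
        (psi A - psi B) \<union> (psi B - psi A) = f ` ((A - B) \<union> (B - A))"
  shows "restrict f (verts H) \<in> Iso H G"
  unfolding Iso_def
proof (intro CollectI conjI ballI)
  show "restrict f (verts H) \<in> extensional (verts H)" by simp
  show "bij_betw (restrict f (verts H)) (verts H) (verts G)"
    using inj surj by (simp add: bij_betw_def)
next
  fix u v assume u: "u \<in> verts H" and v: "v \<in> verts H"
  show "({u, v} \<in> edges H) = ({restrict f (verts H) u, restrict f (verts H) v} \<in> edges G)"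
  proof (cases "u = v")
    case True
    have "{u, v} \<notin> edges H" using sH True by (auto simp: simple_graph_def)
    moreover have "{f u, f v} \<notin> edges G" using sG True by (auto simp: simple_graph_def)
    ultimately show ?thesis using u v by simp
  next
    case False
    obtain B0 where B0: "B0 \<subseteq> verts H - {u, v}" "card B0 = k - 1" "finite B0"
      using ex_B0[OF fin u v False k] by blast
    let ?A = "insert u B0" and ?B = "insert v B0"
    have nuv: "u \<notin> B0" "v \<notin> B0" using B0(1) by auto
    have "card ?A = k" "card ?B = k" using nuv B0 k(1) by simp_all
    then have A: "?A \<in> token_verts H k" and B: "?B \<in> token_verts H k"
      using B0 u v by (auto simp: token_verts_def)
    have sdAB: "(?A - ?B) \<union> (?B - ?A) = {u, v}" using B0 False by auto
    have pA: "psi ?A \<in> token_verts G k" "psi ?B \<in> token_verts G k"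
      using psi A B by (auto simp: Iso_def bij_betw_def)
    have "({u, v} \<in> edges H) = ({?A, ?B} \<in> edges (token_graph H k))"
      using edges_tg[OF A B] sdAB by simp
    also have "\<dots> = ({psi ?A, psi ?B} \<in> edges (token_graph G k))"
      using Iso_D(3)[OF psi] A B by simp
    also have "\<dots> = ((psi ?A - psi ?B) \<union> (psi ?B - psi ?A) \<in> edges G)"
      using edges_tg[OF pA] .
    also have "\<dots> = ({f u, f v} \<in> edges G)" using sd[OF A B] sdAB by simp
    finally show ?thesis using u v by simp
  qed
qed

lemma mem_psi_kappa:
  assumes "inj_on psi (token_verts H k)" "A \<in> token_verts H k"
  shows "(psi A \<in> psi ` kappa H u k) = (u \<in> A)"
proof -
  have "kappa H u k \<subseteq> token_verts H k" by (auto simp: kappa_def)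
  then have "(psi A \<in> psi ` kappa H u k) = (A \<in> kappa H u k)"
    using inj_on_image_mem_iff[OF assms(1)] assms(2) by blast
  then show ?thesis using assms(2) by (simp add: kappa_def)
qed

lemma char_back:
  assumes sH: "simple_graph H" and sG: "simple_graph G"
    and psi: "psi \<in> Iso (token_graph H k) (token_graph G k)"
    and finH: "finite (verts H)" and cardHG: "card (verts H) = card (verts G)"
    and n3: "3 \<le> card (verts G)" and k: "1 \<le> k" "k \<le> card (verts G) - 1"
    and f: "\<forall>u\<in>verts H. f u \<in> verts G \<and>
             (psi ` kappa H u k = kappa G (f u) k \<or> psi ` kappa H u k = kappa_bar G (f u) k)"
  shows "\<exists>g\<in>Iso H G. psi = iota H k g \<or> psi = compose (token_verts H k) (cmpl G k) (iota H k g)"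
proof -
  have finG: "finite (verts G)" using sG by (simp add: simple_graph_def)
  have kH: "k \<le> card (verts H) - 1" using k cardHG by simp
  have bpsi: "bij_betw psi (token_verts H k) (token_verts G k)" using psi by (simp add: Iso_def)
  have injpsi: "inj_on psi (token_verts H k)" using bpsi by (simp add: bij_betw_def)
  have psiT: "psi A \<in> token_verts G k" if "A \<in> token_verts H k" for A
    using bpsi that bij_betwE by blast
  have ext: "psi \<in> extensional (token_verts H k)" using psi by (simp add: Iso_def)
  define tp where "tp u = (psi ` kappa H u k = kappa G (f u) k)" for u
  have S1: "(f u \<in> psi A) = ((u \<in> A) = tp u)" if u: "u \<in> verts H" and A: "A \<in> token_verts H k" for u A
  proof -
    have m: "(psi A \<in> psi ` kappa H u k) = (u \<in> A)" by (rule mem_psi_kappa[OF injpsi A])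
    have pA: "psi A \<in> token_verts G k" using psiT[OF A] .
    show ?thesis
    proof (cases "tp u")
      case True
      then have "psi ` kappa H u k = kappa G (f u) k" by (simp add: tp_def)
      then have "(u \<in> A) = (f u \<in> psi A)" using m pA by (simp add: kappa_def)
      then show ?thesis using True by simp
    next
      case False
      then have "psi ` kappa H u k = kappa_bar G (f u) k" using f u unfolding tp_def by blast
      then have "(u \<in> A) = (f u \<notin> psi A)" using m pA by (simp add: kappa_bar_def)
      then show ?thesis using False by simp
    qed
  qed
  have S2: "inj_on f (verts H)"
  proof (rule inj_onI)
    fix u v assume u: "u \<in> verts H" and v: "v \<in> verts H" and eq: "f u = f v"
    show "u = v"
    proof (rule ccontr)
      assume ne: "u \<noteq> v"
      obtain A1 where A1: "A1 \<subseteq> verts H" "card A1 = k" "u \<in> A1" "v \<notin> A1"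
        using ex_sep[OF finH u v ne k(1) kH] by blast
      have A1T: "A1 \<in> token_verts H k" using A1 by (simp add: token_verts_def)
      have t1: "tp u = (\<not> tp v)" using S1[OF u A1T] S1[OF v A1T] eq A1 by simp
      obtain A2 where A2: "A2 \<subseteq> verts H" "card A2 = k" "(u \<in> A2) = (v \<in> A2)"
        using ex_same[OF finH u v ne k(1) kH] n3 cardHG by auto
      have A2T: "A2 \<in> token_verts H k" using A2 by (simp add: token_verts_def)
      have "tp u = tp v" using S1[OF u A2T] S1[OF v A2T] eq A2(3) by auto
      then show False using t1 by simp
    qed
  qed
  have S3: "f ` verts H = verts G"
  proof (rule card_subset_eq[OF finG])
    show "f ` verts H \<subseteq> verts G" using f by auto
    show "card (f ` verts H) = card (verts G)" using card_image[OF S2] cardHG by simp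
  qed
  define D where "D A = {u \<in> verts H. (u \<in> A) = tp u}" for A
  have S4: "psi A = f ` D A" if A: "A \<in> token_verts H k" for A
  proof
    show "psi A \<subseteq> f ` D A"
    proof
      fix x assume x: "x \<in> psi A"
      then have "x \<in> verts G" using tv_sub[OF psiT[OF A]] by blast
      then obtain u where u: "u \<in> verts H" "x = f u" using S3 by blast
      then have "u \<in> D A" using S1[OF u(1) A] x by (simp add: D_def)
      then show "x \<in> f ` D A" using u by blast
    qed
    show "f ` D A \<subseteq> psi A"
    proof
      fix x assume "x \<in> f ` D A"
      then obtain u where u: "u \<in> D A" "x = f u" by blast
      then show "x \<in> psi A" using S1[of u A] A by (simp add: D_def)
    qed
  qed
  have DW: "D A \<subseteq> verts H" for A by (auto simp: D_def)
  have cardD: "card (D A) = k" if A: "A \<in> token_verts H k" for A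
  proof -
    have "card (f ` D A) = card (D A)" using card_image[OF inj_on_subset[OF S2 DW]] .
    then show ?thesis using S4[OF A] tv_card[OF psiT[OF A]] by simp
  qed
  have S5: "(\<forall>u\<in>verts H. tp u) \<or> (\<forall>u\<in>verts H. \<not> tp u)"
  proof (rule ccontr)
    assume "\<not> ?thesis"
    then obtain p q where p: "p \<in> verts H" "tp p" and q: "q \<in> verts H" "\<not> tp q" by blast
    have pq: "p \<noteq> q" using p q by blast
    obtain A where A: "A \<subseteq> verts H" "card A = k" "p \<in> A" "q \<notin> A"
      using ex_sep[OF finH p(1) q(1) pq k(1) kH] by blast
    have AT: "A \<in> token_verts H k" using A by (simp add: token_verts_def)
    have finA: "finite A" using A(1) finH finite_subset by blast
    let ?A' = "insert q (A - {p})"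
    have "card (A - {p}) = k - 1" using A finA by simp
    moreover have "q \<notin> A - {p}" using A by simp
    moreover have "finite (A - {p})" using finA by simp
    ultimately have "card ?A' = k" using k(1) by simp
    moreover have "?A' \<subseteq> verts H" using A q by auto
    ultimately have A'T: "?A' \<in> token_verts H k" by (simp add: token_verts_def)
    have DA': "D ?A' = D A - {p, q}" using p q pq A by (auto simp: D_def)
    have sub: "{p, q} \<subseteq> D A" using p q A by (auto simp: D_def)
    have finD: "finite (D A)" using DW finH finite_subset by blast
    have "card (D ?A') = card (D A) - 2"
      using card_Diff_subset[OF _ sub] pq DA' by simp
    then show False using cardD[OF AT] cardD[OF A'T] k(1) by simp
  qed
  let ?g = "restrict f (verts H)"
  have bg: "bij_betw ?g (verts H) (verts G)" using S2 S3 by (simp add: bij_betw_def)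
  have gimg: "?g ` A = f ` A" if "A \<in> token_verts H k" for A
    using image_restrict_sub[OF tv_sub[OF that]] .
  from S5 show ?thesis
  proof
    assume all: "\<forall>u\<in>verts H. tp u"
    have pe: "psi A = f ` A" if A: "A \<in> token_verts H k" for A
    proof -
      have "D A = A" using all tv_sub[OF A] by (auto simp: D_def)
      then show ?thesis using S4[OF A] by simp
    qed
    have iso: "?g \<in> Iso H G"
    proof (rule iso_from_symdiff[OF sH sG psi finH S2 S3 k(1) kH])
      fix A B assume A: "A \<in> token_verts H k" and B: "B \<in> token_verts H k"
      show "(psi A - psi B) \<union> (psi B - psi A) = f ` ((A - B) \<union> (B - A))"
        using image_symdiff[OF S2 tv_sub[OF A] tv_sub[OF B]] pe[OF A] pe[OF B] by simp
    qed
    have "psi = iota H k ?g"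
    proof (rule extensionalityI[OF ext])
      show "iota H k ?g \<in> extensional (token_verts H k)" by (simp add: iota_def)
      fix A assume A: "A \<in> token_verts H k"
      show "psi A = iota H k ?g A" using pe[OF A] gimg[OF A] A by simp
    qed
    then show ?thesis using iso by blast
  next
    assume all: "\<forall>u\<in>verts H. \<not> tp u"
    have pe: "psi A = verts G - f ` A" if A: "A \<in> token_verts H k" for A
    proof -
      have "D A = verts H - A" using all tv_sub[OF A] by (auto simp: D_def)
      moreover have "f ` (verts H - A) = f ` verts H - f ` A"
        using inj_on_image_set_diff[OF S2 _ tv_sub[OF A]] by simp
      ultimately show ?thesis using S4[OF A] S3 by simp
    qed
    have iso: "?g \<in> Iso H G"
    proof (rule iso_from_symdiff[OF sH sG psi finH S2 S3 k(1) kH])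
      fix A B assume A: "A \<in> token_verts H k" and B: "B \<in> token_verts H k"
      have "f ` A \<subseteq> verts G" "f ` B \<subseteq> verts G" using S3 tv_sub[OF A] tv_sub[OF B] by auto
      then have "(psi A - psi B) \<union> (psi B - psi A) = (f ` A - f ` B) \<union> (f ` B - f ` A)"
        using pe[OF A] pe[OF B] by auto
      then show "(psi A - psi B) \<union> (psi B - psi A) = f ` ((A - B) \<union> (B - A))"
        using image_symdiff[OF S2 tv_sub[OF A] tv_sub[OF B]] by simp
    qed
    have "psi = compose (token_verts H k) (cmpl G k) (iota H k ?g)"
    proof (rule extensionalityI[OF ext])
      show "compose (token_verts H k) (cmpl G k) (iota H k ?g) \<in> extensional (token_verts H k)"
        by (rule compose_extensional)
      fix A assume A: "A \<in> token_verts H k"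
      have "?g ` A \<in> token_verts G k" using tv_image[OF bg A] .
      then show "psi A = compose (token_verts H k) (cmpl G k) (iota H k ?g) A"
        using pe[OF A] gimg[OF A] A by (simp add: compose_def)
    qed
    then show ?thesis using iso by blast
  qed
qed

lemma char_fwd:
  assumes g: "g \<in> Iso H G" and psi: "psi \<in> Iso (token_graph H k) (token_graph G k)"
    and u: "u \<in> verts H"
    and h: "psi = iota H k g \<or> psi = compose (token_verts H k) (cmpl G k) (iota H k g)"
  shows "g u \<in> verts G \<and> (psi ` kappa H u k = kappa G (g u) k \<or> psi ` kappa H u k = kappa_bar G (g u) k)"
proof -
  have bg: "bij_betw g (verts H) (verts G)" using g by (simp add: Iso_def)
  have injg: "inj_on g (verts H)" using bg by (simp add: bij_betw_def)
  have gu: "g u \<in> verts G" using bg u bij_betwE by blast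
  have bpsi: "bij_betw psi (token_verts H k) (token_verts G k)" using psi by (simp add: Iso_def)
  have memA: "u \<in> A" if A: "A \<in> token_verts H k" and gA: "g u \<in> g ` A" for A
  proof -
    obtain x where x: "x \<in> A" "g x = g u" using gA by auto
    have "x \<in> verts H" using x(1) tv_sub[OF A] by blast
    then have "x = u" using injg u x(2) by (simp add: inj_on_def)
    then show ?thesis using x(1) by simp
  qed
  from h have "psi ` kappa H u k = kappa G (g u) k \<or> psi ` kappa H u k = kappa_bar G (g u) k"
  proof
    assume p: "psi = iota H k g"
    have "psi ` kappa H u k = kappa G (g u) k"
    proof
      show "psi ` kappa H u k \<subseteq> kappa G (g u) k"
      proof
        fix x assume "x \<in> psi ` kappa H u k"
        then obtain A where A: "A \<in> token_verts H k" "u \<in> A" "x = psi A" by (auto simp: kappa_def)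
        then show "x \<in> kappa G (g u) k" using p tv_image[OF bg A(1)] by (auto simp: kappa_def)
      qed
      show "kappa G (g u) k \<subseteq> psi ` kappa H u k"
      proof
        fix B assume "B \<in> kappa G (g u) k"
        then have B: "B \<in> token_verts G k" "g u \<in> B" by (auto simp: kappa_def)
        obtain A where A: "A \<in> token_verts H k" "g ` A = B" using tv_preimage[OF bg B(1)] by blast
        have "u \<in> A" using memA[OF A(1)] A(2) B(2) by simp
        then have "A \<in> kappa H u k" using A(1) by (simp add: kappa_def)
        moreover have "psi A = B" using p A by simp
        ultimately show "B \<in> psi ` kappa H u k" by blast
      qed
    qed
    then show ?thesis by simp
  next
    assume p: "psi = compose (token_verts H k) (cmpl G k) (iota H k g)"
    have pv: "psi A = verts G - g ` A" if A: "A \<in> token_verts H k" for A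
      using p A tv_image[OF bg A] by (simp add: compose_def)
    have "psi ` kappa H u k = kappa_bar G (g u) k"
    proof
      show "psi ` kappa H u k \<subseteq> kappa_bar G (g u) k"
      proof
        fix x assume "x \<in> psi ` kappa H u k"
        then obtain A where A: "A \<in> token_verts H k" "u \<in> A" "x = psi A" by (auto simp: kappa_def)
        have "psi A \<in> token_verts G k" using bpsi A(1) bij_betwE by blast
        then show "x \<in> kappa_bar G (g u) k" using A pv[OF A(1)] by (auto simp: kappa_bar_def)
      qed
      show "kappa_bar G (g u) k \<subseteq> psi ` kappa H u k"
      proof
        fix B assume "B \<in> kappa_bar G (g u) k"
        then have B: "B \<in> token_verts G k" "g u \<notin> B" by (auto simp: kappa_bar_def)
        obtain A where A: "A \<in> token_verts H k" "psi A = B"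
          using bpsi B(1) by (metis bij_betw_imp_surj_on imageE)
        have "g u \<in> g ` A" using B(2) A(2) pv[OF A(1)] gu by blast
        then have "u \<in> A" using memA[OF A(1)] by simp
        then show "B \<in> psi ` kappa H u k" using A by (auto simp: kappa_def)
      qed
    qed
    then show ?thesis by simp
  qed
  then show ?thesis using gu by simp
qed

definition P3 :: "('b, 'n) sgraph_scheme \<Rightarrow> ('a, 'm) sgraph_scheme \<Rightarrow> nat \<Rightarrow> bool" where
  "P3 H G k \<longleftrightarrow> (\<forall>psi \<in> Iso (token_graph H k) (token_graph G k).
         \<exists>g \<in> Iso H G. psi = iota H k g \<or>
                        psi = compose (token_verts H k) (cmpl G k) (iota H k g))"

lemma compose_image: "B \<subseteq> A \<Longrightarrow> compose A g h ` B = g ` h ` B"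
  by (force simp: compose_def)

lemma transport:
  assumes sX: "simple_graph X" and sY: "simple_graph Y" and sZ: "simple_graph Z"
    and h: "h \<in> Iso Y X" and P: "P3 X Z k"
  shows "P3 Y Z k"
  unfolding P3_def
proof
  fix psi assume psi: "psi \<in> Iso (token_graph Y k) (token_graph Z k)"
  let ?hi = "restrict (inv_into (verts Y) h) (verts X)"
  have hi: "?hi \<in> Iso X Y" using Iso_inv[OF h] .
  have bh: "bij_betw h (verts Y) (verts X)" using h by (simp add: Iso_def)
  have bhi: "bij_betw ?hi (verts X) (verts Y)" using hi by (simp add: Iso_def)
  let ?phi = "compose (token_verts X k) psi (iota X k ?hi)"
  have phi: "?phi \<in> Iso (token_graph X k) (token_graph Z k)"
    using Iso_compose[OF iota_Iso[OF sX sY hi] psi] by simp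
  obtain g where g: "g \<in> Iso X Z" and gc: "?phi = iota X k g \<or>
      ?phi = compose (token_verts X k) (cmpl Z k) (iota X k g)"
    using P phi unfolding P3_def by blast
  let ?g' = "compose (verts Y) g h"
  have g': "?g' \<in> Iso Y Z" using Iso_compose[OF h g] .
  have bg': "bij_betw ?g' (verts Y) (verts Z)" using g' by (simp add: Iso_def)
  have ext: "psi \<in> extensional (token_verts Y k)" using psi by (simp add: Iso_def)
  have key: "psi A = ?phi (h ` A)" and img: "g ` (h ` A) = ?g' ` A" and hA: "h ` A \<in> token_verts X k"
    if A: "A \<in> token_verts Y k" for A
  proof -
    show hA: "h ` A \<in> token_verts X k" using tv_image[OF bh A] .
    have AY: "A \<subseteq> verts Y" using tv_sub[OF A] .
    have "?hi ` (h ` A) = inv_into (verts Y) h ` h ` A"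
      using image_restrict_sub[OF tv_sub[OF hA]] .
    also have "\<dots> = A" using inv_into_image_cancel[OF _ AY] bh unfolding bij_betw_def by blast
    finally have "?hi ` (h ` A) = A" .
    then show "psi A = ?phi (h ` A)" using hA by (simp add: compose_def)
    show "g ` (h ` A) = ?g' ` A" by (rule compose_image[OF AY, symmetric])
  qed
  from gc have "psi = iota Y k ?g' \<or> psi = compose (token_verts Y k) (cmpl Z k) (iota Y k ?g')"
  proof
    assume p: "?phi = iota X k g"
    have "psi = iota Y k ?g'"
    proof (rule extensionalityI[OF ext])
      show "iota Y k ?g' \<in> extensional (token_verts Y k)" by (simp add: iota_def)
      fix A assume A: "A \<in> token_verts Y k"
      show "psi A = iota Y k ?g' A" using key[OF A] img[OF A] hA[OF A] A p by simp
    qed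
    then show ?thesis by simp
  next
    assume p: "?phi = compose (token_verts X k) (cmpl Z k) (iota X k g)"
    have "psi = compose (token_verts Y k) (cmpl Z k) (iota Y k ?g')"
    proof (rule extensionalityI[OF ext])
      show "compose (token_verts Y k) (cmpl Z k) (iota Y k ?g') \<in> extensional (token_verts Y k)"
        by (rule compose_extensional)
      fix A assume A: "A \<in> token_verts Y k"
      have "psi A = compose (token_verts X k) (cmpl Z k) (iota X k g) (h ` A)"
        using key[OF A] unfolding p .
      then have "psi A = cmpl Z k (iota X k g (h ` A))"
        using hA[OF A] by (simp add: compose_def)
      also have "\<dots> = cmpl Z k (iota Y k ?g' A)" using img[OF A] hA[OF A] A by simp
      finally show "psi A = compose (token_verts Y k) (cmpl Z k) (iota Y k ?g') A"
        using A by (simp add: compose_def)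
    qed
    then show ?thesis by simp
  qed
  then show "\<exists>g\<in>Iso Y Z. psi = iota Y k g \<or> psi = compose (token_verts Y k) (cmpl Z k) (iota Y k g)"
    using g' by blast
qed

lemma UR_iff:
  "uniquely_reconstructible G k \<longleftrightarrow> P3 G G k"
proof
  assume UR: "uniquely_reconstructible G k"
  show "P3 G G k" unfolding P3_def
  proof
    fix psi assume psi: "psi \<in> Iso (token_graph G k) (token_graph G k)"
    let ?id = "restrict id (token_verts G k)"
    have idI: "?id \<in> Iso (token_graph G k) (token_graph G k)" using Iso_id[of "token_graph G k"] by simp
    obtain s where s: "s \<in> Aut G" and
      c: "psi = compose (token_verts G k) (iota G k s) ?id \<or>
          psi = compose (token_verts G k) (cmpl G k) (compose (token_verts G k) (iota G k s) ?id)"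
      using UR psi idI unfolding uniquely_reconstructible_def by blast
    have e: "compose (token_verts G k) (iota G k s) ?id = iota G k s"
    proof (rule extensionalityI)
      show "compose (token_verts G k) (iota G k s) ?id \<in> extensional (token_verts G k)"
        by (rule compose_extensional)
      show "iota G k s \<in> extensional (token_verts G k)" by (simp add: iota_def)
      fix A assume "A \<in> token_verts G k"
      then show "compose (token_verts G k) (iota G k s) ?id A = iota G k s A" by (simp add: compose_def)
    qed
    show "\<exists>g\<in>Iso G G. psi = iota G k g \<or> psi = compose (token_verts G k) (cmpl G k) (iota G k g)"
      using s c e by (auto simp: Aut_def)
  qed
next
  assume P: "P3 G G k"
  show "uniquely_reconstructible G k" unfolding uniquely_reconstructible_def
  proof (intro ballI)
    fix phi psi assume phi: "phi \<in> Iso (token_graph G k) (token_graph G k)"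
      and psi: "psi \<in> Iso (token_graph G k) (token_graph G k)"
    let ?T = "token_verts G k"
    let ?phii = "restrict (inv_into ?T phi) ?T"
    have phii: "?phii \<in> Iso (token_graph G k) (token_graph G k)" using Iso_inv[OF phi] by simp
    let ?chi = "compose ?T psi ?phii"
    have chi: "?chi \<in> Iso (token_graph G k) (token_graph G k)" using Iso_compose[OF phii psi] by simp
    obtain s where s: "s \<in> Iso G G" and c: "?chi = iota G k s \<or> ?chi = compose ?T (cmpl G k) (iota G k s)"
      using P chi unfolding P3_def by blast
    have bphi: "bij_betw phi ?T ?T" using phi by (simp add: Iso_def)
    have phiT: "phi A \<in> ?T" if "A \<in> ?T" for A using bphi that bij_betwE by blast
    have chiphi: "?chi (phi A) = psi A" if A: "A \<in> ?T" for A
    proof -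
      have "inv_into ?T phi (phi A) = A" using bphi A by (simp add: bij_betw_def)
      then show ?thesis using phiT[OF A] by (simp add: compose_def)
    qed
    have ext: "psi \<in> extensional ?T" using psi by (simp add: Iso_def)
    from c have "psi = compose ?T (iota G k s) phi \<or>
        psi = compose ?T (cmpl G k) (compose ?T (iota G k s) phi)"
    proof
      assume p: "?chi = iota G k s"
      have "psi = compose ?T (iota G k s) phi"
      proof (rule extensionalityI[OF ext compose_extensional])
        fix A assume A: "A \<in> ?T"
        have "psi A = iota G k s (phi A)" using chiphi[OF A] unfolding p by (rule sym)
        then show "psi A = compose ?T (iota G k s) phi A"
          using A by (simp add: compose_def)
      qed
      then show ?thesis by simp
    next
      assume p: "?chi = compose ?T (cmpl G k) (iota G k s)"
      have "psi = compose ?T (cmpl G k) (compose ?T (iota G k s) phi)"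
      proof (rule extensionalityI[OF ext compose_extensional])
        fix A assume A: "A \<in> ?T"
        have "psi A = compose ?T (cmpl G k) (iota G k s) (phi A)" using chiphi[OF A] unfolding p by (rule sym)
        then show "psi A = compose ?T (cmpl G k) (compose ?T (iota G k s) phi) A"
          using A phiT[OF A] by (simp add: compose_def)
      qed
      then show ?thesis by simp
    qed
    then show "\<exists>s\<in>Aut G. psi = compose ?T (iota G k s) phi \<or>
        psi = compose ?T (cmpl G k) (compose ?T (iota G k s) phi)"
      using s by (auto simp: Aut_def)
  qed
qed

lemma Aut_bij: "s \<in> Aut G \<Longrightarrow> bij_betw s (verts G) (verts G)"
  by (simp add: Aut_def Iso_def)

lemma iota_compose:
  assumes s: "s \<in> Aut G" and t: "t \<in> Aut G"
  shows "iota G k (compose (verts G) s t) = compose (token_verts G k) (iota G k s) (iota G k t)"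
proof (rule extensionalityI)
  show "iota G k (compose (verts G) s t) \<in> extensional (token_verts G k)" by (simp add: iota_def)
  show "compose (token_verts G k) (iota G k s) (iota G k t) \<in> extensional (token_verts G k)"
    by (rule compose_extensional)
  fix A assume A: "A \<in> token_verts G k"
  have "t ` A \<in> token_verts G k" using tv_image[OF Aut_bij[OF t] A] .
  then show "iota G k (compose (verts G) s t) A = compose (token_verts G k) (iota G k s) (iota G k t) A"
    using A compose_image[OF tv_sub[OF A]] by (simp add: compose_def)
qed

lemma iota_eq_imp:
  assumes fin: "finite (verts G)" and k: "1 \<le> k" "k \<le> card (verts G) - 1"
    and s: "s \<in> Aut G" and t: "t \<in> Aut G"
    and eq: "\<And>A. A \<in> token_verts G k \<Longrightarrow> s ` A = t ` A"
  shows "s = t"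
proof (rule extensionalityI)
  show "s \<in> extensional (verts G)" "t \<in> extensional (verts G)" using s t by (auto simp: Aut_def Iso_def)
  fix v assume v: "v \<in> verts G"
  show "s v = t v"
  proof (rule ccontr)
    assume ne: "s v \<noteq> t v"
    have bs: "bij_betw s (verts G) (verts G)" and bt: "bij_betw t (verts G) (verts G)"
      using Aut_bij s t by auto
    have sv: "s v \<in> verts G" using bs v bij_betwE by blast
    obtain w where w: "w \<in> verts G" "t w = s v" using bt sv by (metis bij_betw_imp_surj_on imageE)
    have wv: "v \<noteq> w" using ne w by auto
    obtain A where A: "A \<subseteq> verts G" "card A = k" "v \<in> A" "w \<notin> A"
      using ex_sep[OF fin v w(1) wv k] by blast
    have AT: "A \<in> token_verts G k" using A by (simp add: token_verts_def)
    have "s v \<in> t ` A" using eq[OF AT] A(3) by blast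
    then obtain x where x: "x \<in> A" "t x = s v" by auto
    have "x = w" using bt x A(1) w by (metis bij_betw_def inj_on_def subsetD)
    then show False using x A by simp
  qed
qed

lemma iota_inj:
  assumes "finite (verts G)" "1 \<le> k" "k \<le> card (verts G) - 1"
  shows "inj_on (iota G k) (Aut G)"
proof (rule inj_onI)
  fix s t assume s: "s \<in> Aut G" and t: "t \<in> Aut G" and e: "iota G k s = iota G k t"
  show "s = t"
  proof (rule iota_eq_imp[OF assms s t])
    fix A assume A: "A \<in> token_verts G k"
    show "s ` A = t ` A" using fun_cong[OF e, of A] A by simp
  qed
qed

lemma ex_contain:
  assumes "finite V" "v \<in> V" "w \<in> V" "2 \<le> k" "k \<le> card V"
  shows "\<exists>A. A \<subseteq> V \<and> card A = k \<and> v \<in> A \<and> w \<in> A"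
proof -
  have c2: "card {v, w} \<le> 2" by (simp add: card_insert_le_m1)
  have sub: "{v, w} \<subseteq> V" using assms by auto
  have "card (V - {v, w}) = card V - card {v, w}" using card_Diff_subset[OF _ sub] by simp
  then have "k - card {v, w} \<le> card (V - {v, w})" using assms(5) by simp
  then obtain B0 where B0: "B0 \<subseteq> V - {v, w}" "card B0 = k - card {v, w}" "finite B0"
    using obtain_subset_with_card_n by blast
  have "card ({v, w} \<union> B0) = card {v, w} + card B0"
    using B0 by (intro card_Un_disjoint) auto
  then have "card ({v, w} \<union> B0) = k" using B0(2) c2 assms(4) by simp
  moreover have "{v, w} \<union> B0 \<subseteq> V" using B0 sub by auto
  ultimately show ?thesis by blast
qed

definition hm2 :: "('a, 'm) sgraph_scheme \<Rightarrow> nat \<Rightarrow> ('a \<Rightarrow> 'a) \<times> int \<Rightarrow> 'a set \<Rightarrow> 'a set" where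
  "hm2 G k p = (if snd p = 0 then iota G k (fst p)
                else compose (token_verts G k) (cmpl G k) (iota G k (fst p)))"

lemma hm2_apply:
  assumes "s \<in> Aut G" "A \<in> token_verts G k"
  shows "hm2 G k (s, i) A = (if i = 0 then s ` A else verts G - s ` A)"
  using assms tv_image[OF Aut_bij[OF assms(1)] assms(2)] by (simp add: hm2_def compose_def)

lemma hm2_ext: "hm2 G k p \<in> extensional (token_verts G k)"
  by (simp add: hm2_def iota_def compose_extensional)

lemma hm2_Aut:
  assumes sG: "simple_graph G" and n: "card (verts G) = 2 * k" and s: "s \<in> Aut G"
  shows "hm2 G k (s, i) \<in> Aut (token_graph G k)"
proof -
  have fin: "finite (verts G)" using sG by (simp add: simple_graph_def)
  have i: "iota G k s \<in> Aut (token_graph G k)"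
    using iota_Iso[OF sG sG] s by (simp add: Aut_def)
  have "compose (token_verts G k) (cmpl G k) (iota G k s) \<in> Aut (token_graph G k)"
    using Iso_compose[of "iota G k s" "token_graph G k" "token_graph G k" "cmpl G k" "token_graph G k"]
      i cmpl_Aut[OF fin n] by (simp add: Aut_def)
  then show ?thesis using i by (simp add: hm2_def)
qed

lemma hm2_val_tv:
  assumes fin: "finite (verts G)" and n: "card (verts G) = 2 * k" and s: "s \<in> Aut G"
    and A: "A \<in> token_verts G k"
  shows "(if i = 0 then s ` A else verts G - s ` A) \<in> token_verts G k"
  using tv_image[OF Aut_bij[OF s] A] cmpl_tv[OF fin n] by simp

lemma img_compl:
  assumes "bij_betw s V V" "X \<subseteq> V"
  shows "s ` (V - X) = V - s ` X"
  using assms inj_on_image_set_diff[of s V V X] by (simp add: bij_betw_def)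

lemma hm2_hom:
  assumes sG: "simple_graph G" and n: "card (verts G) = 2 * k"
    and s: "s \<in> Aut G" and t: "t \<in> Aut G" and i: "i \<in> {0, 1}" and j: "j \<in> {0, 1}"
  shows "hm2 G k (compose (verts G) s t, (i + j) mod 2) =
         compose (token_verts G k) (hm2 G k (s, i)) (hm2 G k (t, j))"
proof (rule extensionalityI[OF hm2_ext compose_extensional])
  fix A assume A: "A \<in> token_verts G k"
  have fin: "finite (verts G)" using sG by (simp add: simple_graph_def)
  have st: "compose (verts G) s t \<in> Aut G" using Iso_compose s t by (simp add: Aut_def)
  have AV: "A \<subseteq> verts G" using tv_sub[OF A] .
  have bs: "bij_betw s (verts G) (verts G)" using Aut_bij[OF s] .
  have bt: "bij_betw t (verts G) (verts G)" using Aut_bij[OF t] .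
  have tA: "t ` A \<subseteq> verts G" using AV bt bij_betw_imp_surj_on by blast
  have stA: "s ` t ` A \<subseteq> verts G" using tA bs bij_betw_imp_surj_on by blast
  have c1: "compose (verts G) s t ` A = s ` t ` A" using compose_image[OF AV] .
  have hj: "hm2 G k (t, j) A \<in> token_verts G k"
    unfolding hm2_apply[OF t A] by (rule hm2_val_tv[OF fin n t A])
  have r: "compose (token_verts G k) (hm2 G k (s, i)) (hm2 G k (t, j)) A =
        (if i = 0 then s ` (hm2 G k (t, j) A) else verts G - s ` (hm2 G k (t, j) A))"
    using A hm2_apply[OF s hj] by (simp add: compose_def)
  have l: "hm2 G k (compose (verts G) s t, (i + j) mod 2) A =
     (if (i + j) mod 2 = 0 then s ` t ` A else verts G - s ` t ` A)"
    using hm2_apply[OF st A] c1 by simp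
  have sc: "s ` (verts G - t ` A) = verts G - s ` t ` A" using img_compl[OF bs tA] .
  have dd: "verts G - (verts G - s ` t ` A) = s ` t ` A" using stA by auto
  show "hm2 G k (compose (verts G) s t, (i + j) mod 2) A =
        compose (token_verts G k) (hm2 G k (s, i)) (hm2 G k (t, j)) A"
    unfolding l r hm2_apply[OF t A] using i j sc dd by auto
qed

lemma hm2_inj:
  assumes sG: "simple_graph G" and n: "card (verts G) = 2 * k" and n3: "3 \<le> card (verts G)"
  shows "inj_on (hm2 G k) (Aut G \<times> {0, 1})"
proof (rule inj_onI)
  fix x y assume x: "x \<in> Aut G \<times> {0, 1}" and y: "y \<in> Aut G \<times> {0, 1}" and e: "hm2 G k x = hm2 G k y"
  obtain s i where si: "x = (s, i)" "s \<in> Aut G" "i \<in> {0, 1}" using x by auto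
  obtain t j where tj: "y = (t, j)" "t \<in> Aut G" "j \<in> {0, 1}" using y by auto
  have fin: "finite (verts G)" using sG by (simp add: simple_graph_def)
  have k: "1 \<le> k" "k \<le> card (verts G) - 1" "2 \<le> k" using n n3 by auto
  have eA: "(if i = 0 then s ` A else verts G - s ` A) = (if j = 0 then t ` A else verts G - t ` A)"
    if A: "A \<in> token_verts G k" for A
    using fun_cong[OF e, of A] hm2_apply[OF si(2) A] hm2_apply[OF tj(2) A] si tj by simp
  have subs: "s ` A \<subseteq> verts G" "t ` A \<subseteq> verts G" if A: "A \<in> token_verts G k" for A
    using tv_sub[OF tv_image[OF Aut_bij[OF si(2)] A]] tv_sub[OF tv_image[OF Aut_bij[OF tj(2)] A]] by auto
  show "x = y"
  proof (cases "i = j")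
    case True
    have "s ` A = t ` A" if A: "A \<in> token_verts G k" for A
    proof -
      have "(if i = 0 then s ` A else verts G - s ` A) = (if i = 0 then t ` A else verts G - t ` A)"
        using eA[OF A] True by simp
      then show ?thesis
      proof (cases "i = 0")
        case False
        with \<open>(if i = 0 then s ` A else verts G - s ` A) = (if i = 0 then t ` A else verts G - t ` A)\<close>
        have "verts G - s ` A = verts G - t ` A" by simp
        then have "verts G - (verts G - s ` A) = verts G - (verts G - t ` A)" by simp
        then show ?thesis using double_diff[OF subs(1)[OF A] order_refl] double_diff[OF subs(2)[OF A] order_refl] by simp
      qed simp
    qed
    then have "s = t" using iota_eq_imp[OF fin k(1,2) si(2) tj(2)] by blast
    then show ?thesis using si tj True by simp
  next
    case False
    then have opp: "s ` A = verts G - t ` A" if A: "A \<in> token_verts G k" for A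
    proof -
      have "(i = 0 \<and> j = 1) \<or> (i = 1 \<and> j = 0)" using False si(3) tj(3) by auto
      then show ?thesis
      proof
        assume "i = 0 \<and> j = 1" then show ?thesis using eA[OF A] by simp
      next
        assume "i = 1 \<and> j = 0"
        then have "verts G - s ` A = t ` A" using eA[OF A] by simp
        then have "verts G - t ` A = verts G - (verts G - s ` A)" by simp
        then show ?thesis using double_diff[OF subs(1)[OF A] order_refl] by simp
      qed
    qed
    obtain v where v: "v \<in> verts G" using n3 by (metis card.empty ex_in_conv not_numeral_le_zero)
    have bs: "bij_betw s (verts G) (verts G)" and bt: "bij_betw t (verts G) (verts G)"
      using Aut_bij si(2) tj(2) by auto
    have sv: "s v \<in> verts G" using bs v bij_betwE by blast
    obtain w where w: "w \<in> verts G" "t w = s v" using bt sv by (metis bij_betw_imp_surj_on imageE)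
    obtain A where A: "A \<subseteq> verts G" "card A = k" "v \<in> A" "w \<in> A"
      using ex_contain[OF fin v w(1) k(3)] n by auto
    have AT: "A \<in> token_verts G k" using A by (simp add: token_verts_def)
    have "s v \<in> s ` A" using A by auto
    moreover have "s v \<in> t ` A" using A(4) w(2) by (metis imageI)
    ultimately have "s v \<in> s ` A" "s v \<in> t ` A" by auto
    then show ?thesis using opp[OF AT] by simp
  qed
qed

lemma finite_Aut_tg:
  assumes "finite (verts G)"
  shows "finite (Aut (token_graph G k))"
proof -
  have fT: "finite (token_verts G k)"
    by (rule finite_subset[of _ "Pow (verts G)"]) (auto simp: token_verts_def assms)
  have "Aut (token_graph G k) \<subseteq> token_verts G k \<rightarrow>\<^sub>E token_verts G k"
    by (auto simp: Aut_def Iso_def PiE_def bij_betw_def)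
  moreover have "finite (token_verts G k \<rightarrow>\<^sub>E token_verts G k)"
    using fT by (intro finite_PiE) auto
  ultimately show ?thesis using finite_subset by blast
qed

lemma Z2_carrier: "carrier (integer_mod_group 2) = {0, 1::int}"
  by (auto simp: carrier_integer_mod_group)

lemma no_cmpl:
  assumes fin: "finite (verts G)" and nk: "2 * k \<noteq> card (verts G)" and kn: "k \<le> card (verts G)"
    and psi: "psi \<in> Aut (token_graph G k)" and g: "g \<in> Aut G"
  shows "psi \<noteq> compose (token_verts G k) (cmpl G k) (iota G k g)"
proof
  assume p: "psi = compose (token_verts G k) (cmpl G k) (iota G k g)"
  obtain A where A: "A \<subseteq> verts G" "card A = k" "finite A"
    using obtain_subset_with_card_n[OF kn] by blast
  have AT: "A \<in> token_verts G k" using A by (simp add: token_verts_def)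
  have gA: "g ` A \<in> token_verts G k" using tv_image[OF Aut_bij[OF g] AT] .
  have "psi A = verts G - g ` A" using p AT gA by (simp add: compose_def)
  moreover have "psi A \<in> token_verts G k"
    using psi AT by (auto simp: Aut_def Iso_def bij_betw_def)
  ultimately have "card (verts G - g ` A) = k" by (simp add: token_verts_def)
  moreover have "card (verts G - g ` A) = card (verts G) - k"
    using card_Diff_subset[OF finite_subset[OF tv_sub[OF gA] fin] tv_sub[OF gA]] tv_card[OF gA] by simp
  ultimately show False using nk kn by simp
qed

lemma U_iff_P2:
  assumes sG: "simple_graph G" and n3: "3 \<le> card (verts G)"
    and k: "1 \<le> k" "k \<le> card (verts G) - 1"
  shows "P3 G G k \<longleftrightarrow> (if 2 * k = card (verts G)
         then aut_group (token_graph G k) \<cong> DirProd (aut_group G) (integer_mod_group 2)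
         else aut_group (token_graph G k) \<cong> aut_group G)"
proof -
  have fin: "finite (verts G)" using sG by (simp add: simple_graph_def)
  have finA: "finite (Aut (token_graph G k))" using finite_Aut_tg[OF fin] .
  show ?thesis
  proof (cases "2 * k = card (verts G)")
    case True
    have n: "card (verts G) = 2 * k" using True by simp
    have sub: "hm2 G k ` (Aut G \<times> {0, 1}) \<subseteq> Aut (token_graph G k)"
      using hm2_Aut[OF sG n] by auto
    have inj: "inj_on (hm2 G k) (Aut G \<times> {0, 1})" using hm2_inj[OF sG n n3] .
    have "P3 G G k \<longleftrightarrow> aut_group (token_graph G k) \<cong> DirProd (aut_group G) (integer_mod_group 2)"
    proof
      assume P: "P3 G G k"
      have hom: "hm2 G k \<in> hom (DirProd (aut_group G) (integer_mod_group 2)) (aut_group (token_graph G k))"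
        unfolding hom_def
      proof (intro CollectI conjI ballI)
        show "hm2 G k \<in> carrier (aut_group G \<times>\<times> integer_mod_group 2) \<rightarrow> carrier (aut_group (token_graph G k))"
          using sub by (auto simp: aut_group_def Z2_carrier)
      next
        fix x y assume x: "x \<in> carrier (aut_group G \<times>\<times> integer_mod_group 2)"
          and y: "y \<in> carrier (aut_group G \<times>\<times> integer_mod_group 2)"
        obtain s i where si: "x = (s, i)" "s \<in> Aut G" "i \<in> {0, 1}"
          using x by (auto simp: aut_group_def Z2_carrier)
        obtain t j where tj: "y = (t, j)" "t \<in> Aut G" "j \<in> {0, 1}"
          using y by (auto simp: aut_group_def Z2_carrier)
        show "hm2 G k (x \<otimes>\<^bsub>aut_group G \<times>\<times> integer_mod_group 2\<^esub> y) =
              hm2 G k x \<otimes>\<^bsub>aut_group (token_graph G k)\<^esub> hm2 G k y"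
          using hm2_hom[OF sG n si(2) tj(2) si(3) tj(3)] si(1) tj(1)
          by (simp add: aut_group_def)
      qed
      have "hm2 G k ` (Aut G \<times> {0, 1}) = Aut (token_graph G k)"
      proof
        show "hm2 G k ` (Aut G \<times> {0, 1}) \<subseteq> Aut (token_graph G k)" using sub .
        show "Aut (token_graph G k) \<subseteq> hm2 G k ` (Aut G \<times> {0, 1})"
        proof
          fix psi assume "psi \<in> Aut (token_graph G k)"
          then obtain g where g: "g \<in> Iso G G"
            and c: "psi = iota G k g \<or> psi = compose (token_verts G k) (cmpl G k) (iota G k g)"
            using P unfolding P3_def Aut_def by blast
          from c have "psi = hm2 G k (g, 0) \<or> psi = hm2 G k (g, 1)" by (auto simp: hm2_def)
          then show "psi \<in> hm2 G k ` (Aut G \<times> {0, 1})" using g by (auto simp: Aut_def)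
        qed
      qed
      then have "bij_betw (hm2 G k) (carrier (DirProd (aut_group G) (integer_mod_group 2)))
          (carrier (aut_group (token_graph G k)))"
        using inj by (simp add: bij_betw_def aut_group_def Z2_carrier)
      then have "hm2 G k \<in> iso (DirProd (aut_group G) (integer_mod_group 2)) (aut_group (token_graph G k))"
        using hom by (simp add: iso_def)
      then have "DirProd (aut_group G) (integer_mod_group 2) \<cong> aut_group (token_graph G k)"
        by (rule is_isoI)
      then show "aut_group (token_graph G k) \<cong> DirProd (aut_group G) (integer_mod_group 2)"
        using group.iso_sym[OF DirProd_group[OF group_aut group_integer_mod_group]] by blast
    next
      assume I: "aut_group (token_graph G k) \<cong> DirProd (aut_group G) (integer_mod_group 2)"
      have "card (Aut (token_graph G k)) = card (Aut G \<times> {0, 1::int})"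
        using iso_same_card[OF I] by (simp add: aut_group_def Z2_carrier)
      also have "\<dots> = card (hm2 G k ` (Aut G \<times> {0, 1}))" using card_image[OF inj] by simp
      finally have eq: "hm2 G k ` (Aut G \<times> {0, 1}) = Aut (token_graph G k)"
        using card_subset_eq[OF finA sub] by simp
      show "P3 G G k" unfolding P3_def
      proof
        fix psi assume "psi \<in> Iso (token_graph G k) (token_graph G k)"
        then have "psi \<in> hm2 G k ` (Aut G \<times> {0, 1})" using eq by (simp add: Aut_def)
        then obtain s i where si: "s \<in> Aut G" "i \<in> {0, 1::int}" "psi = hm2 G k (s, i)" by auto
        then have "psi = iota G k s \<or> psi = compose (token_verts G k) (cmpl G k) (iota G k s)"
          by (auto simp: hm2_def)
        then show "\<exists>g\<in>Iso G G. psi = iota G k g \<or> psi = compose (token_verts G k) (cmpl G k) (iota G k g)"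
          using si(1) by (auto simp: Aut_def)
      qed
    qed
    then show ?thesis using True by simp
  next
    case False
    have sub: "iota G k ` Aut G \<subseteq> Aut (token_graph G k)"
      using iota_Iso[OF sG sG] by (auto simp: Aut_def)
    have inj: "inj_on (iota G k) (Aut G)" using iota_inj[OF fin k] .
    have kn: "k \<le> card (verts G)" using k by simp
    have "P3 G G k \<longleftrightarrow> aut_group (token_graph G k) \<cong> aut_group G"
    proof
      assume P: "P3 G G k"
      have hom: "iota G k \<in> hom (aut_group G) (aut_group (token_graph G k))"
        unfolding hom_def
      proof (intro CollectI conjI ballI)
        show "iota G k \<in> carrier (aut_group G) \<rightarrow> carrier (aut_group (token_graph G k))"
          using sub by (auto simp: aut_group_def)
      next
        fix x y assume "x \<in> carrier (aut_group G)" "y \<in> carrier (aut_group G)"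
        then show "iota G k (x \<otimes>\<^bsub>aut_group G\<^esub> y) = iota G k x \<otimes>\<^bsub>aut_group (token_graph G k)\<^esub> iota G k y"
          using iota_compose by (simp add: aut_group_def)
      qed
      have "iota G k ` Aut G = Aut (token_graph G k)"
      proof
        show "iota G k ` Aut G \<subseteq> Aut (token_graph G k)" using sub .
        show "Aut (token_graph G k) \<subseteq> iota G k ` Aut G"
        proof
          fix psi assume psi: "psi \<in> Aut (token_graph G k)"
          then obtain g where g: "g \<in> Iso G G"
            and c: "psi = iota G k g \<or> psi = compose (token_verts G k) (cmpl G k) (iota G k g)"
            using P unfolding P3_def Aut_def by blast
          have "psi \<noteq> compose (token_verts G k) (cmpl G k) (iota G k g)"
            using no_cmpl[OF fin False kn psi] g by (simp add: Aut_def)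
          then have "psi = iota G k g" using c by blast
          then show "psi \<in> iota G k ` Aut G" using g by (auto simp: Aut_def)
        qed
      qed
      then have "bij_betw (iota G k) (carrier (aut_group G)) (carrier (aut_group (token_graph G k)))"
        using inj by (simp add: bij_betw_def aut_group_def)
      then have "iota G k \<in> iso (aut_group G) (aut_group (token_graph G k))"
        using hom by (simp add: iso_def)
      then have "aut_group G \<cong> aut_group (token_graph G k)" by (rule is_isoI)
      then show "aut_group (token_graph G k) \<cong> aut_group G"
        using group.iso_sym[OF group_aut] by blast
    next
      assume I: "aut_group (token_graph G k) \<cong> aut_group G"
      have "card (Aut (token_graph G k)) = card (Aut G)"
        using iso_same_card[OF I] by (simp add: aut_group_def)
      also have "\<dots> = card (iota G k ` Aut G)" using card_image[OF inj] by simp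
      finally have eq: "iota G k ` Aut G = Aut (token_graph G k)"
        using card_subset_eq[OF finA sub] by simp
      show "P3 G G k" unfolding P3_def
      proof
        fix psi assume "psi \<in> Iso (token_graph G k) (token_graph G k)"
        then have "psi \<in> iota G k ` Aut G" using eq by (simp add: Aut_def)
        then obtain s where "s \<in> Aut G" "psi = iota G k s" by auto
        then show "\<exists>g\<in>Iso G G. psi = iota G k g \<or> psi = compose (token_verts G k) (cmpl G k) (iota G k g)"
          by (auto simp: Aut_def)
      qed
    qed
    then show ?thesis using False by simp
  qed
qed

lemma P3_iff_P4:
  assumes sH: "simple_graph H" and sG: "simple_graph G"
    and finH: "finite (verts H)" and cardHG: "card (verts H) = card (verts G)"
    and n3: "3 \<le> card (verts G)" and k: "1 \<le> k" "k \<le> card (verts G) - 1"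
  shows "P3 H G k \<longleftrightarrow> (\<exists>f. \<forall>psi \<in> Iso (token_graph H k) (token_graph G k).
         \<forall>u \<in> verts H. f psi u \<in> verts G \<and>
           (psi ` kappa H u k = kappa G (f psi u) k \<or>
            psi ` kappa H u k = kappa_bar G (f psi u) k))"
proof
  assume P: "P3 H G k"
  define f where "f psi = (SOME g. g \<in> Iso H G \<and> (psi = iota H k g \<or>
      psi = compose (token_verts H k) (cmpl G k) (iota H k g)))" for psi
  have "\<forall>psi \<in> Iso (token_graph H k) (token_graph G k).
         \<forall>u \<in> verts H. f psi u \<in> verts G \<and>
           (psi ` kappa H u k = kappa G (f psi u) k \<or>
            psi ` kappa H u k = kappa_bar G (f psi u) k)"
  proof (intro ballI)
    fix psi u assume psi: "psi \<in> Iso (token_graph H k) (token_graph G k)" and u: "u \<in> verts H"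
    have "\<exists>g. g \<in> Iso H G \<and> (psi = iota H k g \<or> psi = compose (token_verts H k) (cmpl G k) (iota H k g))"
      using P psi unfolding P3_def by blast
    then have fp: "f psi \<in> Iso H G \<and> (psi = iota H k (f psi) \<or>
        psi = compose (token_verts H k) (cmpl G k) (iota H k (f psi)))"
      unfolding f_def by (rule someI_ex)
    show "f psi u \<in> verts G \<and>
           (psi ` kappa H u k = kappa G (f psi u) k \<or>
            psi ` kappa H u k = kappa_bar G (f psi u) k)"
      using char_fwd[OF conjunct1[OF fp] psi u conjunct2[OF fp]] .
  qed
  then show "\<exists>f. \<forall>psi \<in> Iso (token_graph H k) (token_graph G k).
         \<forall>u \<in> verts H. f psi u \<in> verts G \<and>
           (psi ` kappa H u k = kappa G (f psi u) k \<or>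
            psi ` kappa H u k = kappa_bar G (f psi u) k)" by blast
next
  assume "\<exists>f. \<forall>psi \<in> Iso (token_graph H k) (token_graph G k).
         \<forall>u \<in> verts H. f psi u \<in> verts G \<and>
           (psi ` kappa H u k = kappa G (f psi u) k \<or>
            psi ` kappa H u k = kappa_bar G (f psi u) k)"
  then obtain f where f: "\<forall>psi \<in> Iso (token_graph H k) (token_graph G k).
         \<forall>u \<in> verts H. f psi u \<in> verts G \<and>
           (psi ` kappa H u k = kappa G (f psi u) k \<or>
            psi ` kappa H u k = kappa_bar G (f psi u) k)" by blast
  show "P3 H G k" unfolding P3_def
  proof
    fix psi assume psi: "psi \<in> Iso (token_graph H k) (token_graph G k)"
    show "\<exists>g\<in>Iso H G. psi = iota H k g \<or> psi = compose (token_verts H k) (cmpl G k) (iota H k g)"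
      by (rule char_back[OF sH sG psi finH cardHG n3 k, of "f psi"]) (use f psi in blast)
  qed
qed

theorem theorem9:
  fixes G :: "('a, 'm) sgraph_scheme" and H :: "('b, 'n) sgraph_scheme" and k :: nat
  assumes "simple_graph G" and "simple_graph H" and "isomorphic H G"
    and "card (verts G) \<ge> 3"
    and "1 \<le> k" and "k \<le> card (verts G) - 1"
  shows
    "(uniquely_reconstructible G k \<longleftrightarrow>
        (if 2 * k = card (verts G)
         then aut_group (token_graph G k) \<cong> DirProd (aut_group G) (integer_mod_group 2)
         else aut_group (token_graph G k) \<cong> aut_group G))
   \<and> ((if 2 * k = card (verts G)
         then aut_group (token_graph G k) \<cong> DirProd (aut_group G) (integer_mod_group 2)
         else aut_group (token_graph G k) \<cong> aut_group G) \<longleftrightarrow>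
      (\<forall>psi \<in> Iso (token_graph H k) (token_graph G k).
         \<exists>g \<in> Iso H G. psi = iota H k g \<or>
                        psi = compose (token_verts H k) (cmpl G k) (iota H k g)))
   \<and> ((\<forall>psi \<in> Iso (token_graph H k) (token_graph G k).
         \<exists>g \<in> Iso H G. psi = iota H k g \<or>
                        psi = compose (token_verts H k) (cmpl G k) (iota H k g)) \<longleftrightarrow>
      (\<exists>f. \<forall>psi \<in> Iso (token_graph H k) (token_graph G k).
         \<forall>u \<in> verts H. f psi u \<in> verts G \<and>
           (psi ` kappa H u k = kappa G (f psi u) k \<or>
            psi ` kappa H u k = kappa_bar G (f psi u) k)))"
proof -
  note sG = assms(1) and sH = assms(2)
  have n3: "3 \<le> card (verts G)" using assms(4) by simp
  have k: "1 \<le> k" "k \<le> card (verts G) - 1" using assms(5,6) by simp_all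
  have finH: "finite (verts H)" using sH by (simp add: simple_graph_def)
  obtain g0 where g0: "g0 \<in> Iso H G" using assms(3) unfolding isomorphic_def by blast
  have cardHG: "card (verts H) = card (verts G)"
    using g0 bij_betw_same_card unfolding Iso_def by blast
  have g0i: "restrict (inv_into (verts H) g0) (verts G) \<in> Iso G H" using Iso_inv[OF g0] .
  have T: "P3 H G k \<longleftrightarrow> P3 G G k"
  proof
    assume "P3 H G k" then show "P3 G G k" using transport[OF sH sG sG g0i] by blast
  next
    assume "P3 G G k" then show "P3 H G k" using transport[OF sG sH sG g0] by blast
  qed
  have A: "uniquely_reconstructible G k \<longleftrightarrow> P3 G G k" by (rule UR_iff)
  have B: "P3 G G k \<longleftrightarrow> (if 2 * k = card (verts G)
         then aut_group (token_graph G k) \<cong> DirProd (aut_group G) (integer_mod_group 2)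
         else aut_group (token_graph G k) \<cong> aut_group G)" by (rule U_iff_P2[OF sG n3 k])
  have C: "P3 H G k \<longleftrightarrow> (\<exists>f. \<forall>psi \<in> Iso (token_graph H k) (token_graph G k).
         \<forall>u \<in> verts H. f psi u \<in> verts G \<and>
           (psi ` kappa H u k = kappa G (f psi u) k \<or>
            psi ` kappa H u k = kappa_bar G (f psi u) k))"
    by (rule P3_iff_P4[OF sH sG finH cardHG n3 k])
  show ?thesis using A B C T unfolding P3_def by blast
qed

end
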